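(* Let $q$ be a prime power, $r\ge 1$ an integer, and $\mathcal{S}$ a $q^r$-divisible spanning set of $q^{r+1}$ points in $\mathrm{PG}(v-1,q)$. Then the number of hyperplanes $H$ with $|\mathcal{S}\cap H|=q^r$ is at least $\frac{q^v-1}{q-1}-\left(q^{v-r-1}-q+1\right)$.
   Context: $\mathrm{PG}(v-1,q)$ is the projective space of $\mathbb{F}_q^v$; points are $1$-dimensional and hyperplanes $(v-1)$-dimensional subspaces of $\mathbb{F}_q^v$. A set $\mathcal{S}$ of points is spanning if its points span $\mathbb{F}_q^v$, and it is $q^r$-divisible if $|\mathcal{S}\cap H|\equiv|\mathcal{S}|\pmod{q^r}$ for every hyperplane $H$. *)

theory Defs
  imports Complex_Main
begin

text \<open>Coordinates: F_q^v is modelled as functions 'n => 'a, where 'a is a finite field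
  (so q = CARD('a) is a prime power) and v = CARD('n).\<close>

definition lin_subspace :: "('n \<Rightarrow> 'a::field) set \<Rightarrow> bool" where
  "lin_subspace W \<longleftrightarrow> (\<lambda>i. 0) \<in> W \<and> (\<forall>x\<in>W. \<forall>y\<in>W. (\<lambda>i. x i + y i) \<in> W)
     \<and> (\<forall>c. \<forall>x\<in>W. (\<lambda>i. c * x i) \<in> W)"

definition lin_span :: "('n \<Rightarrow> 'a::field) set \<Rightarrow> ('n \<Rightarrow> 'a) set" where
  "lin_span X = \<Inter>{W. lin_subspace W \<and> X \<subseteq> W}"

definition proj_points :: "('n::finite \<Rightarrow> 'a::{field,finite}) set set" where
  "proj_points = {{(\<lambda>i. c * x i) | c. True} | x. x \<noteq> (\<lambda>i. 0)}"

definition proj_hyperplanes :: "('n::finite \<Rightarrow> 'a::{field,finite}) set set" where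
  "proj_hyperplanes = {{x. (\<Sum>i\<in>UNIV. a i * x i) = 0} | a. a \<noteq> (\<lambda>i. 0)}"

definition spanning_set :: "('n::finite \<Rightarrow> 'a::{field,finite}) set set \<Rightarrow> bool" where
  "spanning_set S \<longleftrightarrow> lin_span (\<Union>S) = UNIV"

definition pts_in :: "('n::finite \<Rightarrow> 'a::{field,finite}) set set \<Rightarrow> ('n \<Rightarrow> 'a) set \<Rightarrow> nat" where
  "pts_in S H = card {P\<in>S. P \<subseteq> H}"

definition divisible_set :: "nat \<Rightarrow> ('n::finite \<Rightarrow> 'a::{field,finite}) set set \<Rightarrow> bool" where
  "divisible_set m S \<longleftrightarrow> (\<forall>H\<in>proj_hyperplanes. pts_in S H mod m = card S mod m)"

end

theory Submission imports Defs "HOL-Library.Cardinality" begin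

definition dot :: "('n::finite \<Rightarrow> 'a::field) \<Rightarrow> ('n \<Rightarrow> 'a) \<Rightarrow> 'a" where
  "dot a x = (\<Sum>i\<in>UNIV. a i * x i)"

lemma fiber_card:
  fixes W :: "('n::finite \<Rightarrow> 'a::{field,finite}) set" and g :: "('n \<Rightarrow> 'a) \<Rightarrow> 'a"
  assumes "w0 \<in> W" "g w0 = 1"
    and cl: "\<And>a c. a \<in> W \<Longrightarrow> (\<lambda>i. a i + c * w0 i) \<in> W"
    and gl: "\<And>a c. a \<in> W \<Longrightarrow> g (\<lambda>i. a i + c * w0 i) = g a + c"
  shows "card W = card (UNIV::'a set) * card {a\<in>W. g a = 0}"
proof -
  let ?f = "\<lambda>a. (g a, \<lambda>i. a i + (- g a) * w0 i)"
  let ?h = "\<lambda>(c::'a, b). (\<lambda>i. b i + c * w0 i)"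
  have "bij_betw ?f W ((UNIV::'a set) \<times> {a\<in>W. g a = 0})"
  proof (rule bij_betw_byWitness[where f'="?h"])
    show "\<forall>a\<in>W. ?h (?f a) = a" by (auto simp: algebra_simps)
    show "\<forall>b\<in>(UNIV::'a set) \<times> {a\<in>W. g a = 0}. ?f (?h b) = b"
    proof
      fix b assume b: "b \<in> (UNIV::'a set) \<times> {a\<in>W. g a = 0}"
      obtain c a where [simp]: "b = (c, a)" and a: "a \<in> W" "g a = 0" using b by auto
      show "?f (?h b) = b" using gl[OF a(1), of c] a by (auto simp: algebra_simps)
    qed
    show "?f ` W \<subseteq> UNIV \<times> {a\<in>W. g a = 0}"
    proof
      fix z assume "z \<in> ?f ` W"
      then obtain a where a: "a \<in> W" "z = ?f a" by blast
      show "z \<in> UNIV \<times> {a\<in>W. g a = 0}" using cl[OF a(1), of "- g a"] gl[OF a(1), of "- g a"] a(2) by simp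
    qed
    show "?h ` (UNIV \<times> {a\<in>W. g a = 0}) \<subseteq> W" using cl by auto
  qed
  then have "card W = card ((UNIV::'a set) \<times> {a\<in>W. g a = 0})" by (rule bij_betw_same_card)
  then show ?thesis by (simp add: card_cartesian_product)
qed

lemma dot_add: "dot (\<lambda>i. a i + c * w i) x = dot a x + c * dot w x"
  by (simp add: dot_def algebra_simps sum.distrib sum_distrib_left)

lemma dot_delta: "dot (\<lambda>k. if k = j then u else 0) x = u * x j"
  proof -
  have "dot (\<lambda>k. if k = j then u else 0) x = (\<Sum>k\<in>UNIV. if k = j then u * x k else 0)"
    unfolding dot_def by (rule sum.cong) auto
  then show ?thesis by simp
qed

lemma annih:
  fixes x y :: "'n::finite \<Rightarrow> 'a::field"
  assumes "x \<noteq> (\<lambda>i. 0)" and h: "\<And>a. dot a x = 0 \<Longrightarrow> dot a y = 0"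
  shows "\<exists>c. y = (\<lambda>i. c * x i)"
proof -
  obtain i where xi: "x i \<noteq> 0" using assms(1) by auto
  have "y j = (y i / x i) * x j" for j
  proof -
    let ?a = "\<lambda>k. (if k = j then x i else 0) + (- x j) * (if k = i then 1 else 0)"
    have "dot ?a x = x i * x j - x j * x i"
      by (simp only: dot_add dot_delta) simp
    then have "dot ?a x = 0" by simp
    then have "dot ?a y = 0" by (rule h)
    moreover have "dot ?a y = x i * y j - x j * y i"
      by (simp only: dot_add dot_delta) simp
    ultimately show ?thesis using xi by (simp add: field_simps)
  qed
  then show ?thesis by blast
qed

lemma dot_comm: "dot a x = dot x a"
  by (simp add: dot_def mult.commute)

lemma card_fun_UNIV: "card (UNIV :: ('n::finite \<Rightarrow> 'a::finite) set) = card (UNIV::'a set) ^ card (UNIV::'n set)"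
  using card_fun[where 'a='n and 'b='a] by simp

lemma card_ker1:
  fixes x :: "'n::finite \<Rightarrow> 'a::{field,finite}"
  assumes "x \<noteq> (\<lambda>i. 0)"
  shows "card (UNIV::'a set) * card {a. dot a x = 0} = card (UNIV::'a set) ^ card (UNIV::'n set)"
proof -
  obtain i where xi: "x i \<noteq> 0" using assms by auto
  let ?w = "\<lambda>k. if k = i then 1 / x i else 0"
  have "card (UNIV::('n \<Rightarrow> 'a) set) = card (UNIV::'a set) * card {a\<in>UNIV. dot a x = 0}"
  proof (rule fiber_card[of "?w"])
    show "dot ?w x = 1" using xi by (simp add: dot_delta)
    show "dot (\<lambda>i. a i + c * ?w i) x = dot a x + c" for a c
      using xi by (simp only: dot_add dot_delta) simp
  qed auto
  then show ?thesis by (simp add: card_fun_UNIV)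
qed

lemma card_ker2:
  fixes x y :: "'n::finite \<Rightarrow> 'a::{field,finite}"
  assumes "x \<noteq> (\<lambda>i. 0)" and "\<not> (\<exists>c. y = (\<lambda>i. c * x i))"
  shows "card (UNIV::'a set) * card {a. dot a x = 0 \<and> dot a y = 0} = card {a. dot a x = 0}"
proof -
  obtain b where b: "dot b x = 0" "dot b y \<noteq> 0" using annih[OF assms(1)] assms(2) by blast
  let ?w = "\<lambda>k. (1 / dot b y) * b k"
  have e: "?w = (\<lambda>k. 0 + (1 / dot b y) * b k)" by simp
  have "card {a. dot a x = 0} = card (UNIV::'a set) * card {a\<in>{a. dot a x = 0}. dot a y = 0}"
  proof (rule fiber_card[of "?w"])
    have "dot ?w x = 0 + (1 / dot b y) * dot b x"
      by (subst e, simp only: dot_add) (simp add: dot_def)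
    then show "?w \<in> {a. dot a x = 0}" using b by simp
    have "dot ?w y = 0 + (1 / dot b y) * dot b y"
      by (subst e, simp only: dot_add) (simp add: dot_def)
    then show "dot ?w y = 1" using b by simp
    show "(\<lambda>i. a i + c * ?w i) \<in> {a. dot a x = 0}" if "a \<in> {a. dot a x = 0}" for a c
      using that b by (simp only: dot_add mem_Collect_eq) (simp add: dot_def sum_distrib_left[symmetric] sum_divide_distrib[symmetric] mult.assoc)
    show "dot (\<lambda>i. a i + c * ?w i) y = dot a y + c" if "a \<in> {a. dot a x = 0}" for a c
      using that b by (simp only: dot_add) (simp add: dot_def sum_distrib_left[symmetric] sum_divide_distrib[symmetric] mult.assoc)
  qed
  then show ?thesis by (simp add: conj_commute)
qed

lemma dot_smul1: "dot (\<lambda>i. c * a i) x = c * dot a x"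
  by (simp add: dot_def sum_distrib_left mult.assoc)

lemma dot_smul2: "dot a (\<lambda>i. c * x i) = c * dot a x"
  by (simp add: dot_def sum_distrib_left algebra_simps)

lemma hp_eq:
  fixes a a0 :: "'n::finite \<Rightarrow> 'a::{field,finite}"
  assumes "a0 \<noteq> (\<lambda>i. 0)" "a \<noteq> (\<lambda>i. 0)"
  shows "{x. dot a x = 0} = {x. dot a0 x = 0} \<longleftrightarrow> (\<exists>c. c \<noteq> 0 \<and> a = (\<lambda>i. c * a0 i))"
proof
  assume h: "{x. dot a x = 0} = {x. dot a0 x = 0}"
  have "\<And>b. dot b a0 = 0 \<Longrightarrow> dot b a = 0"
    using h by (auto simp: dot_comm[of _ a0] dot_comm[of _ a] set_eq_iff)
  then obtain c where c: "a = (\<lambda>i. c * a0 i)" using annih[OF assms(1)] by blast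
  then have "c \<noteq> 0" using assms(2) by auto
  then show "\<exists>c. c \<noteq> 0 \<and> a = (\<lambda>i. c * a0 i)" using c by blast
next
  assume "\<exists>c. c \<noteq> 0 \<and> a = (\<lambda>i. c * a0 i)"
  then obtain c where "c \<noteq> 0" "a = (\<lambda>i. c * a0 i)" by blast
  then show "{x. dot a x = 0} = {x. dot a0 x = 0}" by (simp add: dot_smul1)
qed

lemma hyp_count:
  fixes f :: "('n::finite \<Rightarrow> 'a::{field,finite}) set \<Rightarrow> bool"
  shows "card {a::'n\<Rightarrow>'a. a \<noteq> (\<lambda>i. 0) \<and> f {x. dot a x = 0}}
       = (card (UNIV::'a set) - 1) * card {H\<in>(proj_hyperplanes::('n \<Rightarrow> 'a) set set). f H}"
proof -
  define hp where "hp = (\<lambda>a::'n\<Rightarrow>'a. {x. dot a x = 0})"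
  define A1 where "A1 = {a::'n\<Rightarrow>'a. a \<noteq> (\<lambda>i. 0) \<and> f (hp a)}"
  have img: "hp ` A1 = {H\<in>(proj_hyperplanes::('n \<Rightarrow> 'a) set set). f H}"
    unfolding proj_hyperplanes_def A1_def hp_def dot_def by auto
  have fib: "card {a\<in>A1. hp a = H} = card (UNIV::'a set) - 1" if HH: "H \<in> hp ` A1" for H
  proof -
    obtain a0 where a0: "a0 \<in> A1" "H = hp a0" using HH by blast
    have nz: "a0 \<noteq> (\<lambda>i. 0)" using a0 by (simp add: A1_def)
    have "{a\<in>A1. hp a = H} = (\<lambda>c. (\<lambda>i. c * a0 i)) ` {c. c \<noteq> 0}"
    proof (intro set_eqI iffI)
      fix a assume "a \<in> {a\<in>A1. hp a = H}"
      then have "a \<noteq> (\<lambda>i. 0)" "hp a = hp a0" using a0 by (auto simp: A1_def)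
      then show "a \<in> (\<lambda>c. (\<lambda>i. c * a0 i)) ` {c. c \<noteq> 0}"
        using hp_eq[OF nz, of a] unfolding hp_def by auto
    next
      fix a assume "a \<in> (\<lambda>c. (\<lambda>i. c * a0 i)) ` {c. c \<noteq> 0}"
      then obtain c where c: "c \<noteq> 0" "a = (\<lambda>i. c * a0 i)" by blast
      then have anz: "a \<noteq> (\<lambda>i. 0)" using nz by (auto simp: fun_eq_iff)
      have "hp a = hp a0" using hp_eq[OF nz anz] c unfolding hp_def by blast
      then show "a \<in> {a\<in>A1. hp a = H}" using anz a0 by (auto simp: A1_def)
    qed
    moreover have "inj_on (\<lambda>c. (\<lambda>i. c * a0 i)) {c. c \<noteq> 0}"
    proof
      fix c d assume "(\<lambda>i. c * a0 i) = (\<lambda>i. d * a0 i)"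
      moreover obtain i where "a0 i \<noteq> 0" using nz by auto
      ultimately show "c = d" by (metis mult_right_cancel)
    qed
    moreover have "card {c::'a. c \<noteq> 0} = card (UNIV::'a set) - 1"
    proof -
      have "{c::'a. c \<noteq> 0} = UNIV - {0}" by auto
      then show ?thesis by (simp add: card_Diff_subset)
    qed
    ultimately show ?thesis by (simp add: card_image)
  qed
  have "card A1 = (\<Sum>H\<in>hp ` A1. card {a\<in>A1. hp a = H})"
    using sum.image_gen[of A1 "\<lambda>_. 1::nat" hp] by simp
  also have "\<dots> = (\<Sum>H\<in>hp ` A1. card (UNIV::'a set) - 1)" using fib by simp
  also have "\<dots> = (card (UNIV::'a set) - 1) * card (hp ` A1)" by simp
  finally show ?thesis unfolding img[symmetric] A1_def hp_def .
qed

definition pt :: "('n::finite \<Rightarrow> 'a::{field,finite}) set \<Rightarrow> ('n \<Rightarrow> 'a)" where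
  "pt P = (SOME x. x \<noteq> (\<lambda>i. 0) \<and> P = {(\<lambda>i. c * x i) | c. True})"

lemma pt:
  assumes "P \<in> proj_points"
  shows "pt P \<noteq> (\<lambda>i. 0) \<and> P = {(\<lambda>i. c * pt P i) | c. True}"
proof -
  have "\<exists>x. x \<noteq> (\<lambda>i. 0) \<and> P = {(\<lambda>i. c * x i) | c. True}"
    using assms by (auto simp: proj_points_def)
  then show ?thesis unfolding pt_def by (rule someI_ex)
qed

lemma sub_hyp:
  assumes "P \<in> proj_points"
  shows "P \<subseteq> {x. dot a x = 0} \<longleftrightarrow> dot a (pt P) = 0"
proof -
  have P: "P = {(\<lambda>i. c * pt P i) | c. True}" using pt[OF assms] by blast
  have "pt P \<in> P" by (subst P) (auto intro: exI[of _ 1])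
  moreover have "P \<subseteq> {x. dot a x = 0}" if "dot a (pt P) = 0"
    using that by (subst P) (auto simp: dot_smul2)
  ultimately show ?thesis by blast
qed

lemma pt_indep:
  assumes "P \<in> proj_points" "Q \<in> proj_points" "P \<noteq> Q"
  shows "\<not> (\<exists>c. pt Q = (\<lambda>i. c * pt P i))"
proof
  assume "\<exists>c. pt Q = (\<lambda>i. c * pt P i)"
  then obtain c where c: "pt Q = (\<lambda>i. c * pt P i)" by blast
  have PP: "P = {(\<lambda>i. c * pt P i) | c. True}" using pt[OF assms(1)] by blast
  have QQ: "Q = {(\<lambda>i. c * pt Q i) | c. True}" using pt[OF assms(2)] by blast
  have "c \<noteq> 0" using pt[OF assms(2)] c by auto
  have "Q = P"
  proof (intro set_eqI iffI)
    fix z assume "z \<in> Q"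
    then obtain d where "z = (\<lambda>i. d * pt Q i)" using QQ by blast
    then have "z = (\<lambda>i. (d * c) * pt P i)" using c by (simp add: mult.assoc)
    then show "z \<in> P" using PP by blast
  next
    fix z assume "z \<in> P"
    then obtain d where "z = (\<lambda>i. d * pt P i)" using PP by blast
    then have "z = (\<lambda>i. (d / c) * pt Q i)" using c \<open>c \<noteq> 0\<close> by simp
    then show "z \<in> Q" using QQ by blast
  qed
  then show False using assms(3) by simp
qed

lemma card_ind:
  assumes "finite A"
  shows "real (card {x\<in>A. P x}) = (\<Sum>x\<in>A. if P x then 1 else 0)"
  using assms by (simp add: sum.inter_filter[symmetric])

lemma moments:
  fixes S :: "('n::finite \<Rightarrow> 'a::{field,finite}) set set"
  assumes SP: "S \<subseteq> proj_points"
  defines "m \<equiv> \<lambda>a. real (card {P\<in>S. dot a (pt P) = 0})"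
    and "Q \<equiv> real (card (UNIV::'a set))" and "V \<equiv> real (card (UNIV::'a set)) ^ card (UNIV::'n set)"
    and "n \<equiv> real (card S)"
  shows "(\<Sum>a\<in>UNIV. m a) = n * V / Q"
    and "(\<Sum>a\<in>UNIV. (m a)^2) = n * V / Q + n * (n - 1) * V / Q^2"
proof -
  have Q0: "Q \<noteq> 0" unfolding Q_def by simp
  define ind where "ind = (\<lambda>(a::'n\<Rightarrow>'a) (P::('n\<Rightarrow>'a) set). if dot a (pt P) = 0 then (1::real) else 0)"
  have finS: "finite S" by simp
  have mi: "m a = (\<Sum>P\<in>S. ind a P)" for a
    unfolding m_def ind_def by (rule card_ind[OF finS])
  have K1: "real (card {a. dot a (pt P) = 0}) = V / Q" if "P \<in> S" for P
  proof -
    have "pt P \<noteq> (\<lambda>i. 0)" using pt SP that by blast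
    from card_ker1[OF this] have "real (card (UNIV::'a set) * card {a. dot a (pt P) = 0}) = real (card (UNIV::'a set) ^ card (UNIV::'n set))"
      by (simp only:)
    then have "Q * real (card {a. dot a (pt P) = 0}) = V"
      unfolding Q_def V_def by simp
    then show ?thesis using Q0 by (simp add: field_simps)
  qed
  have K2: "real (card {a. dot a (pt P) = 0 \<and> dot a (pt R) = 0}) = V / Q^2"
    if "P \<in> S" "R \<in> S" "P \<noteq> R" for P R
  proof -
    have "pt P \<noteq> (\<lambda>i. 0)" using pt SP that by blast
    have "\<not> (\<exists>c. pt R = (\<lambda>i. c * pt P i))" using pt_indep[of P R] that SP by blast
    from card_ker2[OF \<open>pt P \<noteq> (\<lambda>i. 0)\<close> this]
    have "real (card (UNIV::'a set) * card {a. dot a (pt P) = 0 \<and> dot a (pt R) = 0}) = real (card {a. dot a (pt P) = 0})"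
      by (simp only:)
    then have "Q * real (card {a. dot a (pt P) = 0 \<and> dot a (pt R) = 0}) = real (card {a. dot a (pt P) = 0})"
      unfolding Q_def by simp
    then show ?thesis using Q0 K1[OF that(1)] by (simp add: field_simps power2_eq_square)
  qed
  have "(\<Sum>a\<in>UNIV. m a) = (\<Sum>a\<in>UNIV. \<Sum>P\<in>S. ind a P)" by (simp add: mi)
  also have "\<dots> = (\<Sum>P\<in>S. \<Sum>a\<in>UNIV. ind a P)" by (rule sum.swap)
  also have "\<dots> = (\<Sum>P\<in>S. V / Q)"
  proof (rule sum.cong)
    fix P assume "P \<in> S"
    have "(\<Sum>a\<in>UNIV. ind a P) = real (card {a\<in>UNIV. dot a (pt P) = 0})"
      unfolding ind_def by (rule card_ind[symmetric]) simp
    then show "(\<Sum>a\<in>UNIV. ind a P) = V / Q" using K1[OF \<open>P \<in> S\<close>] by simp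
  qed simp
  finally show "(\<Sum>a\<in>UNIV. m a) = n * V / Q" by (simp add: n_def)
  have "(\<Sum>a\<in>UNIV. (m a)^2) = (\<Sum>a\<in>UNIV. \<Sum>P\<in>S. \<Sum>R\<in>S. ind a P * ind a R)"
    by (simp add: mi power2_eq_square sum_product)
  also have "\<dots> = (\<Sum>P\<in>S. \<Sum>a\<in>UNIV. \<Sum>R\<in>S. ind a P * ind a R)" by (rule sum.swap)
  also have "\<dots> = (\<Sum>P\<in>S. \<Sum>R\<in>S. \<Sum>a\<in>UNIV. ind a P * ind a R)"
    by (rule sum.cong[OF refl], rule sum.swap)
  also have "\<dots> = (\<Sum>P\<in>S. V / Q + (n - 1) * V / Q^2)"
  proof (rule sum.cong[OF refl])
    fix P assume PS: "P \<in> S"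
    have c: "(\<Sum>a\<in>UNIV. ind a P * ind a R) = real (card {a. dot a (pt P) = 0 \<and> dot a (pt R) = 0})" for R
    proof -
      have "(\<Sum>a\<in>UNIV. ind a P * ind a R) = (\<Sum>a\<in>UNIV. if dot a (pt P) = 0 \<and> dot a (pt R) = 0 then 1 else 0)"
        unfolding ind_def by (rule sum.cong) auto
      also have "\<dots> = real (card {a\<in>UNIV. dot a (pt P) = 0 \<and> dot a (pt R) = 0})"
        by (rule card_ind[symmetric]) simp
      finally show ?thesis by simp
    qed
    have "(\<Sum>R\<in>S. \<Sum>a\<in>UNIV. ind a P * ind a R)
        = (\<Sum>a\<in>UNIV. ind a P * ind a P) + (\<Sum>R\<in>S - {P}. \<Sum>a\<in>UNIV. ind a P * ind a R)"
      by (rule sum.remove[OF finS PS])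
    also have "(\<Sum>a\<in>UNIV. ind a P * ind a P) = V / Q"
      using K1[OF PS] by (simp only: c conj_absorb)
    also have "(\<Sum>R\<in>S - {P}. \<Sum>a\<in>UNIV. ind a P * ind a R) = (\<Sum>R\<in>S - {P}. V / Q^2)"
    proof (rule sum.cong[OF refl])
      fix R assume "R \<in> S - {P}"
      then show "(\<Sum>a\<in>UNIV. ind a P * ind a R) = V / Q^2" using K2[OF PS, of R] by (simp only: c) auto
    qed
    also have "(\<Sum>R\<in>S - {P}. V / Q^2) = (n - 1) * V / Q^2"
    proof -
      have "card (S - {P}) = card S - 1" using PS finS by (simp add: card_Diff_singleton)
      moreover have "card S \<ge> 1" using PS finS by (metis card_0_eq empty_iff less_one not_le)
      ultimately have "real (card (S - {P})) = n - 1" unfolding n_def by simp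
      then show ?thesis by simp
    qed
    finally show "(\<Sum>R\<in>S. \<Sum>a\<in>UNIV. ind a P * ind a R) = V / Q + (n - 1) * V / Q^2" .
  qed
  finally show "(\<Sum>a\<in>UNIV. (m a)^2) = n * V / Q + n * (n - 1) * V / Q^2"
    by (simp add: n_def distrib_left)
qed

lemma alg:
  fixes Q R V :: real
  assumes "Q \<noteq> 0" "R \<noteq> 0"
  shows "((R*Q) * V / Q + (R*Q) * ((R*Q) - 1) * V / Q^2 - (R*Q)^2) - 2 * R * ((R*Q) * V / Q - (R*Q)) + R^2 * (V - 1)
     = R^2 * ((Q - 1) * (V / (R * Q) - Q + 1))"
  using assms by (simp add: field_simps power2_eq_square)

theorem mainTheorem2:
  fixes S :: "('n::finite \<Rightarrow> 'a::{field,finite}) set set" and r :: nat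
  assumes "r \<ge> 1"
    and "S \<subseteq> proj_points"
    and "spanning_set S"
    and "divisible_set (card (UNIV::'a set) ^ r) S"
    and "card S = card (UNIV::'a set) ^ (r + 1)"
  shows "real (card {H\<in>proj_hyperplanes. pts_in S H = card (UNIV::'a set) ^ r})
         \<ge> (real (card (UNIV::'a set)) ^ card (UNIV::'n set) - 1) / (real (card (UNIV::'a set)) - 1)
           - (real (card (UNIV::'a set)) powi (int (card (UNIV::'n set)) - int r - 1) - real (card (UNIV::'a set)) + 1)"
proof -
  define q where "q = card (UNIV::'a set)"
  define v where "v = card (UNIV::'n set)"
  define Q where "Q = real q"
  define V where "V = Q ^ v"
  define R where "R = Q ^ r"
  define n where "n = real (card S)"
  define mn where "mn = (\<lambda>a::'n\<Rightarrow>'a. card {P\<in>S. dot a (pt P) = 0})"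
  define m where "m = (\<lambda>a. real (mn a))"
  define X where "X = V / (R * Q) - Q + 1"
  have q2: "q \<ge> 2"
  proof -
    have "card {0::'a, 1} \<le> card (UNIV::'a set)" by (rule card_mono) auto
    then show ?thesis by (simp add: q_def)
  qed
  then have Q2: "Q \<ge> 2" by (simp add: Q_def)
  have R0: "R > 0" using Q2 by (simp add: R_def)
  have nRQ: "n = R * Q" using assms(5) by (simp add: n_def R_def Q_def q_def)
  have pts: "pts_in S {x. dot a x = 0} = mn a" for a
  proof -
    have "{P\<in>S. P \<subseteq> {x. dot a x = 0}} = {P\<in>S. dot a (pt P) = 0}"
      using sub_hyp assms(2) by blast
    then show ?thesis by (simp add: pts_in_def mn_def)
  qed
  have hypin: "{x. dot a x = 0} \<in> proj_hyperplanes" if "a \<noteq> (\<lambda>i. 0)" for a :: "'n \<Rightarrow> 'a"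
    using that unfolding proj_hyperplanes_def dot_def by blast
  have M1: "(\<Sum>a\<in>UNIV. m a) = n * V / Q" and M2: "(\<Sum>a\<in>UNIV. (m a)^2) = n * V / Q + n * (n - 1) * V / Q^2"
    using moments[OF assms(2)] unfolding m_def mn_def n_def V_def Q_def q_def v_def by simp_all
  have m0: "m (\<lambda>i. 0) = n"
    by (simp add: m_def mn_def n_def dot_def)
  define A0 where "A0 = (UNIV::('n\<Rightarrow>'a) set) - {\<lambda>i. 0}"
  have cA0: "real (card A0) = V - 1"
  proof -
    have "card A0 = q ^ v - 1" by (simp add: A0_def card_fun_UNIV q_def v_def)
    moreover have "q ^ v \<ge> 1" using q2 by simp
    ultimately show ?thesis by (simp add: V_def Q_def of_nat_diff)
  qed
  have S1: "(\<Sum>a\<in>A0. m a) = n * V / Q - n" using M1 m0 by (simp add: A0_def sum_diff1)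
  have S2: "(\<Sum>a\<in>A0. (m a)^2) = n * V / Q + n * (n - 1) * V / Q^2 - n^2" using M2 m0 by (simp add: A0_def sum_diff1)
  have "(\<Sum>a\<in>A0. (m a - R)^2) = (\<Sum>a\<in>A0. (m a)^2) - 2 * R * (\<Sum>a\<in>A0. m a) + R^2 * real (card A0)"
    by (simp add: power2_diff sum.distrib sum_subtractf sum_distrib_left sum_distrib_right mult_ac)
  also have "\<dots> = R^2 * ((Q - 1) * X)"
    unfolding S1 S2 cA0 nRQ X_def using R0 Q2 by (subst alg) auto
  finally have T: "(\<Sum>a\<in>A0. (m a - R)^2) = R^2 * ((Q - 1) * X)" .
  define D where "D = {a\<in>A0. mn a \<noteq> q ^ r}"
  define A1 where "A1 = {a\<in>A0. mn a = q ^ r}"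
  have Dge: "(m a - R)^2 \<ge> R^2" if "a \<in> D" for a
  proof -
    have anz: "a \<noteq> (\<lambda>i. 0)" and ne: "mn a \<noteq> q ^ r" using that by (auto simp: D_def A0_def)
    have "pts_in S {x. dot a x = 0} mod q ^ r = card S mod q ^ r"
      using assms(4) hypin[OF anz] unfolding divisible_set_def q_def by blast
    moreover have "card S mod q ^ r = 0" using assms(5) by (simp add: q_def)
    ultimately have "q ^ r dvd mn a" using pts by (simp add: mod_eq_0_iff_dvd)
    then obtain k where k: "mn a = q ^ r * k" by blast
    then have "k \<noteq> 1" using ne by auto
    then have k1: "(real k - 1)^2 \<ge> 1"
    proof (cases "k = 0")
      case False
      then have "real k \<ge> 2" using \<open>k \<noteq> 1\<close> by simp
      then have "real k - 1 \<ge> 1" by simp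
      then show ?thesis by (metis one_le_power)
    qed simp
    have "m a - R = R * (real k - 1)" using k by (simp add: m_def R_def Q_def algebra_simps)
    then have "(m a - R)^2 = R^2 * (real k - 1)^2" by (simp add: power_mult_distrib)
    moreover have "R^2 * 1 \<le> R^2 * (real k - 1)^2" using k1 R0 by (intro mult_left_mono) auto
    ultimately show ?thesis by simp
  qed
  have "real (card D) * R^2 = (\<Sum>a\<in>D. R^2)" by simp
  also have "\<dots> \<le> (\<Sum>a\<in>D. (m a - R)^2)" using Dge by (rule sum_mono)
  also have "\<dots> \<le> (\<Sum>a\<in>A0. (m a - R)^2)" by (rule sum_mono2) (auto simp: D_def)
  finally have "real (card D) * R^2 \<le> R^2 * ((Q - 1) * X)" using T by simp
  then have cD: "real (card D) \<le> (Q - 1) * X" using R0 by (simp add: mult.commute)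
  have "card A0 = card A1 + card D"
  proof -
    have "A0 = A1 \<union> D" "A1 \<inter> D = {}" by (auto simp: A1_def D_def)
    then show ?thesis by (simp add: card_Un_disjoint)
  qed
  then have cA1: "real (card A1) = V - 1 - real (card D)" using cA0 by simp
  have "card A1 = (q - 1) * card {H\<in>(proj_hyperplanes::('n \<Rightarrow> 'a) set set). pts_in S H = q ^ r}"
  proof -
    have "A1 = {a. a \<noteq> (\<lambda>i. 0) \<and> pts_in S {x. dot a x = 0} = q ^ r}"
      by (auto simp: A1_def A0_def pts)
    then show ?thesis using hyp_count[of "\<lambda>H. pts_in S H = q ^ r"] by (simp add: q_def)
  qed
  then have hA1: "real (card A1) = (Q - 1) * real (card {H\<in>(proj_hyperplanes::('n \<Rightarrow> 'a) set set). pts_in S H = q ^ r})"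
    using q2 by (simp add: Q_def of_nat_diff)
  define B where "B = real (card {H\<in>(proj_hyperplanes::('n \<Rightarrow> 'a) set set). pts_in S H = q ^ r})"
  have QB: "(Q - 1) * B \<ge> (V - 1) - (Q - 1) * X"
    using cA1 cD hA1 unfolding B_def by linarith
  have "B \<ge> (V - 1) / (Q - 1) - X"
  proof -
    have "(V - 1) / (Q - 1) - X = ((V - 1) - (Q - 1) * X) / (Q - 1)" using Q2 by (simp add: field_simps)
    also have "\<dots> \<le> ((Q - 1) * B) / (Q - 1)" using QB Q2 by (intro divide_right_mono) auto
    also have "\<dots> = B" using Q2 by simp
    finally show ?thesis .
  qed
  moreover have "Q powi (int v - int r - 1) = V / (R * Q)"
  proof -
    have e: "int v - int r - 1 = int v - int (r + 1)" by simp
    have "Q powi (int v - int (r + 1)) = Q powi int v / Q powi int (r + 1)"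
      by (rule power_int_diff) (use Q2 in simp)
    then have "Q powi (int v - int r - 1) = Q powi int v / Q powi int (r + 1)"
      by (simp only: e)
    then have "Q powi (int v - int r - 1) = Q ^ v / Q ^ (r + 1)"
      by (simp only: power_int_of_nat)
    then show ?thesis by (simp add: V_def R_def mult.commute)
  qed
  ultimately show ?thesis unfolding B_def X_def V_def Q_def q_def v_def by simp
qed

end
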